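(* As formal power series in $q$ (or for $|q|<1$), \[\sum_{\pi\in\overline{\mathcal{P}}}a^{\ell_o(\pi)}q^{|\pi|}=\sum_{m\ge0}\frac{q^m}{(q;q)_m}\sum_{j\ge0}a^jq^{\binom j2}{m\brack j}.\]
   Context: $\overline{\mathcal{P}}$ is the set of all overpartitions, including the empty one. An overpartition is a partition in which the first occurrence of each part size may be overlined. For an overpartition $\pi$: - $|\pi|$ is the sum of the sizes of its parts; - $\ell_o(\pi)$ is the number of overlined parts of $\pi$. $(a;q)_n=\prod_{i=0}^{n-1}(1-aq^i)$. The Gaussian binomial is ${M\brack N}=\frac{(q;q)_M}{(q;q)_N(q;q)_{M-N}}$ for $0\le N\le M$ and $0$ otherwise. *)

theory Defs
  imports "HOL-Analysis.Analysis" "HOL-Library.Multiset"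
begin

text \<open>An overpartition is represented as a pair (P, O): P is the multiset of
  (positive) parts, and O is the set of part sizes whose first occurrence is
  overlined (so O is a subset of the distinct part sizes of P).\<close>

type_synonym overpartition = "nat multiset \<times> nat set"

definition overpartitions :: "overpartition set" where
  "overpartitions = {(P, S). 0 \<notin># P \<and> S \<subseteq> set_mset P}"

definition op_size :: "overpartition \<Rightarrow> nat" where
  "op_size \<pi> = sum_mset (fst \<pi>)"

definition op_overlined :: "overpartition \<Rightarrow> nat" where
  "op_overlined \<pi> = card (snd \<pi>)"

definition qpoch :: "'a::comm_ring_1 \<Rightarrow> 'a \<Rightarrow> nat \<Rightarrow> 'a" where
  "qpoch a q n = (\<Prod>i<n. 1 - a * q ^ i)"

definition qbinom :: "'a::field \<Rightarrow> nat \<Rightarrow> nat \<Rightarrow> 'a" where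
  "qbinom q M N = (if N \<le> M then qpoch q q M / (qpoch q q N * qpoch q q (M - N)) else 0)"

end

theory Submission
  imports Defs
begin


lemma has_sum_mult_prod:
  fixes f :: "'b \<Rightarrow> 'a::{real_normed_field,banach}" and g :: "'c \<Rightarrow> 'a"
  assumes hf: "(f has_sum x) A" and hg: "(g has_sum y) B"
    and nf: "(\<lambda>u. norm (f u)) summable_on A" and ng: "(\<lambda>v. norm (g v)) summable_on B"
  shows "((\<lambda>p. f (fst p) * g (snd p)) has_sum x * y) (A \<times> B)
       \<and> (\<lambda>p. norm (f (fst p) * g (snd p))) summable_on (A \<times> B)"
proof -
  have ns: "(\<lambda>p. norm (f (fst p) * g (snd p))) summable_on Sigma A (\<lambda>_. B)"
  proof (rule summable_on_SigmaI[where g="\<lambda>u. norm (f u) * infsum (\<lambda>v. norm (g v)) B"])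
    fix u assume "u \<in> A"
    show "((\<lambda>v. norm (f (fst (u, v)) * g (snd (u, v)))) has_sum norm (f u) * infsum (\<lambda>v. norm (g v)) B) B"
      using has_sum_cmult_right[OF has_sum_infsum[OF ng], of "norm (f u)"] by (simp add: norm_mult)
  next
    show "(\<lambda>u. norm (f u) * infsum (\<lambda>v. norm (g v)) B) summable_on A"
      using summable_on_cmult_left[OF nf] by blast
  qed auto
  have s: "(\<lambda>p. f (fst p) * g (snd p)) summable_on Sigma A (\<lambda>_. B)"
    using abs_summable_summable[OF ns] .
  have "((\<lambda>p. f (fst p) * g (snd p)) has_sum x * y) (Sigma A (\<lambda>_. B))"
  proof (rule has_sum_SigmaI[where g="\<lambda>u. f u * y"])
    fix u assume "u \<in> A"
    show "((\<lambda>v. f (fst (u, v)) * g (snd (u, v))) has_sum f u * y) B"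
      using has_sum_cmult_right[OF hg, of "f u"] by simp
  next
    show "((\<lambda>u. f u * y) has_sum x * y) A" using has_sum_cmult_left[OF hf] .
  qed (rule s)
  then show ?thesis using ns by simp
qed



lemma geom_has_sum:
  fixes z :: "'a::{real_normed_field,banach}"
  assumes "norm z < 1"
  shows "((\<lambda>n. z ^ n) has_sum 1 / (1 - z)) UNIV \<and> (\<lambda>n. norm (z ^ n)) summable_on UNIV"
proof -
  have s: "summable (\<lambda>n. norm (z ^ n))"
    using assms by (simp add: norm_power summable_geometric)
  have "(\<lambda>n. z ^ n) sums (1 / (1 - z))" using geometric_sums[OF assms] by simp
  then show ?thesis using norm_summable_imp_has_sum[OF s] s
    by (simp add: summable_on_UNIV_nonneg_real_iff)
qed

lemma bool_has_sum:
  fixes c :: "'a::{real_normed_field,banach}"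
  shows "((\<lambda>b::bool. c ^ of_bool b) has_sum 1 + c) UNIV \<and> (\<lambda>b::bool. norm (c ^ of_bool b)) summable_on UNIV"
proof -
  have "((\<lambda>b::bool. c ^ of_bool b) has_sum (\<Sum>b\<in>UNIV. c ^ of_bool b)) UNIV" by (rule has_sum_finite) simp
  moreover have "(\<Sum>b\<in>(UNIV::bool set). c ^ of_bool b) = 1 + c" by (simp add: UNIV_bool)
  ultimately show ?thesis by simp
qed

lemma factor_has_sum:
  fixes a q :: "'a::{real_normed_field,banach}"
  assumes "norm q < 1" "k \<ge> 1"
  shows "((\<lambda>e. (a * q ^ k) ^ of_bool (fst e) * (q ^ k) ^ snd e) has_sum (1 + a * q ^ k) * (1 / (1 - q ^ k))) UNIV
     \<and> (\<lambda>e. norm ((a * q ^ k) ^ of_bool (fst e) * (q ^ k) ^ snd e)) summable_on UNIV"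
proof -
  have "norm (q ^ k) < 1"
    using assms by (simp add: norm_power power_less_one_iff)
  from has_sum_mult_prod[OF conjunct1[OF bool_has_sum[of "a * q ^ k"]] conjunct1[OF geom_has_sum[OF this]]
      conjunct2[OF bool_has_sum[of "a * q ^ k"]] conjunct2[OF geom_has_sum[OF this]]]
  show ?thesis by simp
qed



definition wt :: "'a::real_normed_field \<Rightarrow> 'a \<Rightarrow> overpartition \<Rightarrow> 'a" where
  "wt a q \<pi> = a ^ op_overlined \<pi> * q ^ op_size \<pi>"

definition Aset :: "nat \<Rightarrow> overpartition set" where
  "Aset N = {\<pi> \<in> overpartitions. \<forall>x\<in>#fst \<pi>. x \<le> N}"

definition Lprod :: "'a::real_normed_field \<Rightarrow> 'a \<Rightarrow> nat \<Rightarrow> 'a" where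
  "Lprod a q N = (\<Prod>n\<in>{1..N}. (1 + a * q ^ n) / (1 - q ^ n))"

lemma Aset_0: "Aset 0 = {({#}, {})}"
proof -
  have "P = {#}" if "\<forall>x\<in>#P. x = 0" "0 \<notin># P" for P :: "nat multiset"
    using that by (metis multiset_nonemptyE)
  then show ?thesis by (fastforce simp: Aset_def overpartitions_def)
qed

definition psi :: "nat \<Rightarrow> overpartition \<times> (bool \<times> nat) \<Rightarrow> overpartition" where
  "psi k x = (fst (fst x) + replicate_mset (of_bool (fst (snd x)) + snd (snd x)) k,
              if fst (snd x) then insert k (snd (fst x)) else snd (fst x))"

definition phi :: "nat \<Rightarrow> overpartition \<Rightarrow> overpartition \<times> (bool \<times> nat)" where
  "phi k \<pi> = ((filter_mset (\<lambda>x. x \<noteq> k) (fst \<pi>), snd \<pi> - {k}),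
              (k \<in> snd \<pi>, count (fst \<pi>) k - of_bool (k \<in> snd \<pi>)))"

lemma psi_phi:
  assumes "\<pi> \<in> Aset (Suc N)"
  shows "psi (Suc N) (phi (Suc N) \<pi>) = \<pi>"
proof -
  obtain P S where p: "\<pi> = (P, S)" by (cases \<pi>)
  have sub: "S \<subseteq> set_mset P" using assms by (auto simp: p Aset_def overpartitions_def)
  have "of_bool (Suc N \<in> S) \<le> count P (Suc N)"
    using sub by (auto simp: Suc_le_eq)
  then have "filter_mset (\<lambda>x. x \<noteq> Suc N) P + replicate_mset (of_bool (Suc N \<in> S) + (count P (Suc N) - of_bool (Suc N \<in> S))) (Suc N) = P"
    by (auto simp: multiset_eq_iff)
  then show ?thesis by (auto simp: p psi_def phi_def)
qed

lemma phi_mem: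
  assumes "\<pi> \<in> Aset (Suc N)"
  shows "phi (Suc N) \<pi> \<in> Aset N \<times> UNIV"
  using assms by (auto simp: Aset_def overpartitions_def phi_def)

lemma phi_psi:
  assumes "x \<in> Aset N \<times> UNIV"
  shows "phi (Suc N) (psi (Suc N) x) = x"
proof -
  obtain P S b c where x: "x = ((P, S), (b, c))" by (metis prod.collapse)
  have P: "\<forall>y\<in>#P. y \<le> N" and sub: "S \<subseteq> set_mset P" using assms by (auto simp: x Aset_def overpartitions_def)
  have nk: "Suc N \<notin># P" using P by auto
  then have nS: "Suc N \<notin> S" using sub by auto
  have c0: "count P (Suc N) = 0" using nk by (metis count_greater_zero_iff gr0I)
  have f1: "filter_mset (\<lambda>x. x \<noteq> Suc N) P = P"
    using c0 by (auto simp: multiset_eq_iff)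
  have f2: "filter_mset (\<lambda>x. x \<noteq> Suc N) (replicate_mset n (Suc N)) = {#}" for n
    by (induct n) auto
  from c0 show ?thesis using nS by (auto simp: x psi_def phi_def f1 f2)
qed

lemma psi_mem:
  assumes "x \<in> Aset N \<times> UNIV"
  shows "psi (Suc N) x \<in> Aset (Suc N)"
  using assms by (fastforce simp: Aset_def overpartitions_def psi_def le_SucI split: if_splits)

lemma wt_psi:
  assumes "x \<in> Aset N \<times> UNIV"
  shows "wt a q (psi (Suc N) x) = wt a q (fst x) *
     ((a * q ^ Suc N) ^ of_bool (fst (snd x)) * (q ^ Suc N) ^ snd (snd x))"
proof -
  obtain P S b c where x: "x = ((P, S), (b, c))" by (metis prod.collapse)
  have P: "\<forall>y\<in>#P. y \<le> N" and sub: "S \<subseteq> set_mset P" using assms by (auto simp: x Aset_def overpartitions_def)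
  have nS: "Suc N \<notin> S" using sub P by fastforce
  have fin: "finite S" using sub finite_subset by blast
  have c: "card (if b then insert (Suc N) S else S) = card S + of_bool b"
    using nS fin by auto
  show ?thesis
    by (cases b) (simp_all add: x psi_def wt_def op_overlined_def op_size_def nS fin power_add power_mult_distrib
        power_mult[symmetric] algebra_simps)
qed



lemma Lprod_Suc: "Lprod a q (Suc N) = Lprod a q N * ((1 + a * q ^ Suc N) * (1 / (1 - q ^ Suc N)))"
  by (simp add: Lprod_def prod.cl_ivl_Suc)

lemma A_has_sum:
  fixes a q :: "'a::{real_normed_field,banach}"
  assumes q: "norm q < 1"
  shows "(wt a q has_sum Lprod a q N) (Aset N) \<and> (\<lambda>\<pi>. norm (wt a q \<pi>)) summable_on Aset N"
proof (induction N)
  case 0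
  show ?case by (simp add: Aset_0 Lprod_def wt_def op_overlined_def op_size_def has_sum_finite_iff)
next
  case (Suc N)
  define E where "E = (\<lambda>e::bool\<times>nat. (a * q ^ Suc N) ^ of_bool (fst e) * (q ^ Suc N) ^ snd e)"
  have F: "(E has_sum (1 + a * q ^ Suc N) * (1 / (1 - q ^ Suc N))) UNIV \<and> (\<lambda>e. norm (E e)) summable_on UNIV"
    unfolding E_def by (rule factor_has_sum[OF q]) simp
  have P: "((\<lambda>p. wt a q (fst p) * E (snd p)) has_sum Lprod a q (Suc N)) (Aset N \<times> UNIV)
       \<and> (\<lambda>p. norm (wt a q (fst p) * E (snd p))) summable_on (Aset N \<times> UNIV)"
    using has_sum_mult_prod[OF conjunct1[OF Suc.IH] conjunct1[OF F] conjunct2[OF Suc.IH] conjunct2[OF F]]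
    by (simp add: Lprod_Suc)
  have h: "wt a q (fst (phi (Suc N) \<pi>)) * E (snd (phi (Suc N) \<pi>)) = wt a q \<pi>" if "\<pi> \<in> Aset (Suc N)" for \<pi>
    using wt_psi[OF phi_mem[OF that], of a q] psi_phi[OF that] by (simp add: E_def)
  have "(wt a q has_sum Lprod a q (Suc N)) (Aset (Suc N)) = ((\<lambda>p. wt a q (fst p) * E (snd p)) has_sum Lprod a q (Suc N)) (Aset N \<times> UNIV)"
    by (rule has_sum_reindex_bij_witness[of _ "psi (Suc N)" "phi (Suc N)"])
       (auto simp: psi_phi phi_mem phi_psi psi_mem h)
  moreover have "(\<lambda>\<pi>. norm (wt a q \<pi>)) summable_on Aset (Suc N) \<longleftrightarrow> (\<lambda>p. norm (wt a q (fst p) * E (snd p))) summable_on (Aset N \<times> UNIV)"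
    by (rule summable_on_reindex_bij_witness[of _ "psi (Suc N)" "phi (Suc N)"])
       (auto simp: psi_phi phi_mem phi_psi psi_mem h)
  ultimately show ?case using P by simp
qed



lemma qpoch_Suc: "qpoch q q (Suc n) = qpoch q q n * (1 - q ^ Suc n)"
  by (simp add: qpoch_def)

lemma qpow_ne1:
  fixes q :: "'a::real_normed_field"
  assumes "norm q < 1" shows "1 - q ^ Suc n \<noteq> 0"
proof
  assume "1 - q ^ Suc n = 0"
  then have "norm (q ^ Suc n) = 1" by (metis eq_iff_diff_eq_0 norm_one)
  moreover have "norm (q ^ Suc n) < 1"
  proof -
    have "norm q ^ n \<le> 1" by (rule power_le_one) (use assms in auto)
    then have "norm q * norm q ^ n \<le> norm q" by (rule mult_left_le) simp
    then show ?thesis using assms by (simp add: norm_power norm_mult)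
  qed
  ultimately show False by simp
qed

lemma qpoch_ne0:
  fixes q :: "'a::real_normed_field"
  assumes "norm q < 1" shows "qpoch q q n \<noteq> 0"
  by (induction n) (simp add: qpoch_def, simp only: qpoch_Suc qpow_ne1[OF assms] mult_eq_0_iff, simp)

definition Tm :: "'a::real_normed_field \<Rightarrow> 'a \<Rightarrow> nat \<Rightarrow> 'a" where
  "Tm a q m = q ^ m / qpoch q q m * (\<Prod>i<m. 1 + a * q ^ i)"

lemma Lprod_closed:
  fixes q :: "'a::real_normed_field"
  shows "Lprod a q N = (\<Prod>i<N. 1 + a * q ^ Suc i) / qpoch q q N"
  by (induction N) (simp_all add: Lprod_Suc qpoch_Suc, simp_all add: qpoch_def Lprod_def)

lemma sum_Tm:
  fixes q :: "'a::real_normed_field"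
  assumes q: "norm q < 1"
  shows "(\<Sum>m\<le>N. Tm a q m) = (\<Prod>i<N. 1 + a * q ^ Suc i) / qpoch q q N"
proof (induction N)
  case 0
  then show ?case by (simp add: Tm_def qpoch_def)
next
  case (Suc N)
  have p: "(\<Prod>i<Suc N. 1 + a * q ^ i) = (1 + a) * (\<Prod>i<N. 1 + a * q ^ Suc i)"
    by (subst prod.lessThan_Suc_shift) simp
  have nz: "qpoch q q N \<noteq> 0" "1 - q ^ Suc N \<noteq> 0" using qpoch_ne0[OF q] qpow_ne1[OF q] by auto
  have alg: "X / Y + z / (Y * (1 - z)) * ((1 + a) * X) = X * (1 + a * z) / (Y * (1 - z))"
    if "Y \<noteq> 0" "1 - z \<noteq> 0" for X Y z :: 'a
    using that by (simp add: field_simps)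
  have "(\<Sum>m\<le>Suc N. Tm a q m) = (\<Sum>m\<le>N. Tm a q m) + Tm a q (Suc N)" by simp
  also have "\<dots> = (\<Prod>i<N. 1 + a * q ^ Suc i) / qpoch q q N
      + q ^ Suc N / (qpoch q q N * (1 - q ^ Suc N)) * ((1 + a) * (\<Prod>i<N. 1 + a * q ^ Suc i))"
    by (simp only: Suc.IH) (simp only: Tm_def p qpoch_Suc)
  also have "\<dots> = (\<Prod>i<N. 1 + a * q ^ Suc i) * (1 + a * q ^ Suc N) / (qpoch q q N * (1 - q ^ Suc N))"
    by (rule alg[OF nz])
  also have "\<dots> = (\<Prod>i<Suc N. 1 + a * q ^ Suc i) / qpoch q q (Suc N)"
    by (simp only: prod.lessThan_Suc qpoch_Suc)
  finally show ?case .
qed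

lemma Lprod_sum_Tm:
  fixes q :: "'a::real_normed_field"
  assumes q: "norm q < 1"
  shows "Lprod a q N = (\<Sum>m\<le>N. Tm a q m)"
  using sum_Tm[OF q] Lprod_closed by metis



lemma qbinom_0: "norm q < 1 \<Longrightarrow> qbinom (q::'a::real_normed_field) m 0 = 1"
  using qpoch_ne0[of q m] by (simp add: qbinom_def qpoch_def)

lemma qbinom_diag: "norm q < 1 \<Longrightarrow> qbinom (q::'a::real_normed_field) m m = 1"
  using qpoch_ne0[of q m] by (simp add: qbinom_def qpoch_def)

lemma qbinom_gt: "m < j \<Longrightarrow> qbinom q m j = 0"
  by (simp add: qbinom_def)

lemma qpascal:
  fixes q :: "'a::real_normed_field"
  assumes q: "norm q < 1" and jm: "j \<le> m"
  shows "qbinom q (Suc m) (Suc j) = qbinom q m (Suc j) + q ^ (m - j) * qbinom q m j"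
proof (cases "j = m")
  case True
  then show ?thesis using qbinom_diag[OF q] by (simp add: qbinom_gt)
next
  case False
  then obtain d where m: "m = Suc j + d" using jm by (metis le_SucE le_add_diff_inverse le_antisym not_less_eq_eq)
  define X Y Z u v where "X = qpoch q q m" "Y = qpoch q q j" "Z = qpoch q q d" "u = q ^ Suc j" "v = q ^ Suc d"
  have nz: "X \<noteq> 0" "Y \<noteq> 0" "Z \<noteq> 0" "1 - u \<noteq> 0" "1 - v \<noteq> 0"
    unfolding X_Y_Z_u_v_def using qpoch_ne0[OF q] qpow_ne1[OF q] by auto
  have e1: "qpoch q q (Suc m) = X * (1 - u * v)"
    by (simp add: qpoch_Suc X_Y_Z_u_v_def m power_add[symmetric])
  have e2: "qpoch q q (Suc j) = Y * (1 - u)" by (simp add: qpoch_Suc X_Y_Z_u_v_def)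
  have e3: "qpoch q q (Suc d) = Z * (1 - v)" by (simp add: qpoch_Suc X_Y_Z_u_v_def)
  have d1: "Suc m - Suc j = Suc d" "m - Suc j = d" "m - j = Suc d" "Suc j \<le> Suc m" "Suc j \<le> m" "j \<le> m"
    using m by auto
  have "qbinom q (Suc m) (Suc j) = X * (1 - u * v) / ((Y * (1 - u)) * (Z * (1 - v)))"
    unfolding qbinom_def d1 e1 e2 e3 using d1 by simp
  moreover have "qbinom q m (Suc j) = X / ((Y * (1 - u)) * Z)"
    unfolding qbinom_def d1 e2 using d1 by (simp add: X_Y_Z_u_v_def)
  moreover have "q ^ (m - j) * qbinom q m j = v * (X / (Y * (Z * (1 - v))))"
    unfolding qbinom_def d1 e3[symmetric] using d1 by (simp add: X_Y_Z_u_v_def)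
  moreover have "X * (1 - u * v) / ((Y * (1 - u)) * (Z * (1 - v))) = X / ((Y * (1 - u)) * Z) + v * (X / (Y * (Z * (1 - v))))"
  proof -
    have "X / ((Y * (1 - u)) * Z) + v * (X / (Y * (Z * (1 - v)))) = (X * (1 - v) + v * X * (1 - u)) / ((Y * (1 - u)) * (Z * (1 - v)))"
      using nz by (simp add: add_divide_distrib)
    also have "X * (1 - v) + v * X * (1 - u) = X * (1 - u * v)" by (simp add: algebra_simps)
    finally show ?thesis by simp
  qed
  ultimately show ?thesis by simp
qed

lemma q0c[simp]: "q ^ ((0::nat) choose 2) = 1"
  by (subst binomial_eq_0) auto

lemma choose2_Suc: "Suc j choose 2 = (j choose 2) + j"
  by (simp add: numeral_2_eq_2)

lemma qbinomial_thm:
  fixes q a :: "'a::real_normed_field"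
  assumes q: "norm q < 1"
  shows "(\<Sum>j\<le>m. a ^ j * q ^ (j choose 2) * qbinom q m j) = (\<Prod>i<m. 1 + a * q ^ i)"
proof (induction m)
  case 0
  have "q ^ ((0::nat) choose 2) = 1" by (subst binomial_eq_0) auto
  then show ?case using qbinom_0[OF q] by simp
next
  case (Suc m)
  define f where "f = (\<lambda>j. a ^ j * q ^ (j choose 2) * qbinom q m j)"
  have A: "(\<Sum>j\<le>Suc m. a ^ j * q ^ (j choose 2) * qbinom q (Suc m) j)
     = 1 + (\<Sum>j\<le>m. a ^ Suc j * q ^ (Suc j choose 2) * qbinom q (Suc m) (Suc j))"
    using qbinom_0[OF q] by (subst sum.atMost_Suc_shift) simp
  have B: "(\<Sum>j\<le>m. a ^ Suc j * q ^ (Suc j choose 2) * qbinom q (Suc m) (Suc j))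
     = (\<Sum>j\<le>m. f (Suc j)) + (\<Sum>j\<le>m. a * q ^ m * f j)"
  proof -
    have "a ^ Suc j * q ^ (Suc j choose 2) * qbinom q (Suc m) (Suc j) = f (Suc j) + a * q ^ m * f j"
      if "j \<le> m" for j
    proof -
      have "q ^ (Suc j choose 2) * q ^ (m - j) = q ^ m * q ^ (j choose 2)"
        using that by (simp add: choose2_Suc power_add[symmetric] add.commute)
      then show ?thesis using that
        by (simp add: qpascal[OF q that] f_def algebra_simps)
    qed
    then show ?thesis by (simp add: sum.distrib)
  qed
  have C: "1 + (\<Sum>j\<le>m. f (Suc j)) = (\<Sum>j\<le>m. f j)"
  proof -
    have "(\<Sum>j\<le>Suc m. f j) = f 0 + (\<Sum>j\<le>m. f (Suc j))" by (rule sum.atMost_Suc_shift)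
    moreover have "f 0 = 1" using qbinom_0[OF q] by (simp add: f_def)
    moreover have "f (Suc m) = 0" by (simp add: f_def qbinom_gt)
    ultimately show ?thesis by simp
  qed
  have "(\<Sum>j\<le>Suc m. a ^ j * q ^ (j choose 2) * qbinom q (Suc m) j)
       = (\<Sum>j\<le>m. f j) + a * q ^ m * (\<Sum>j\<le>m. f j)"
    using A B C by (simp add: sum_distrib_left add.assoc[symmetric])
  also have "\<dots> = (\<Prod>i<Suc m. 1 + a * q ^ i)"
    using Suc.IH by (simp add: f_def algebra_simps)
  finally show ?case .
qed



lemma Tm_Suc:
  fixes q :: "'a::real_normed_field"
  assumes q: "norm q < 1"
  shows "Tm a q (Suc m) = Tm a q m * (q * (1 + a * q ^ m) / (1 - q ^ Suc m))"
  using qpoch_ne0[OF q, of m] qpow_ne1[OF q, of m]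
  by (simp add: Tm_def qpoch_Suc field_simps)

lemma Tm_summable:
  fixes q :: "'a::{real_normed_field,banach}"
  assumes q: "norm q < 1"
  shows "summable (Tm a q)"
proof -
  define r where "r = norm q"
  have r0: "0 \<le> r" "r < 1" using q by (auto simp: r_def)
  define R where "R m = r * (1 + norm a * r ^ m) / (1 - r ^ Suc m)" for m
  have lim: "R \<longlonglongrightarrow> r * (1 + norm a * 0) / (1 - r * 0)"
    unfolding R_def power_Suc
    by (intro tendsto_intros LIMSEQ_realpow_zero r0) simp
  have "r < (1 + r) / 2" using r0 by simp
  then have "eventually (\<lambda>m. R m < (1 + r) / 2) sequentially"
    using order_tendstoD(2)[OF lim, of "(1 + r) / 2"] by simp
  then obtain N where N: "\<And>m. m \<ge> N \<Longrightarrow> R m < (1 + r) / 2"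
    by (auto simp: eventually_sequentially)
  show ?thesis
  proof (rule summable_ratio_test[where c="(1 + r) / 2" and N=N])
    show "(1 + r) / 2 < 1" using r0 by simp
  next
    fix m assume m: "N \<le> m"
    have "r ^ m \<le> 1" using r0 by (intro power_le_one) auto
    then have "r * r ^ m \<le> r" using r0 by (intro mult_left_le) auto
    then have rp: "r ^ Suc m < 1" using r0 by simp
    have d: "1 - r ^ Suc m \<le> norm (1 - q ^ Suc m)"
      using norm_triangle_ineq2[of 1 "q ^ Suc m"] by (simp add: norm_power norm_mult r_def)
    have "norm (q * (1 + a * q ^ m) / (1 - q ^ Suc m)) = r * norm (1 + a * q ^ m) / norm (1 - q ^ Suc m)"
      by (simp add: norm_mult norm_divide r_def)
    also have "\<dots> \<le> r * (1 + norm a * r ^ m) / (1 - r ^ Suc m)"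
    proof (rule frac_le)
      show "0 \<le> r * (1 + norm a * r ^ m)" using r0 by simp
      show "r * norm (1 + a * q ^ m) \<le> r * (1 + norm a * r ^ m)"
        using r0 norm_triangle_ineq[of 1 "a * q ^ m"]
        by (intro mult_left_mono) (auto simp: norm_mult norm_power r_def)
      show "0 < 1 - r ^ Suc m" using rp by simp
      show "1 - r ^ Suc m \<le> norm (1 - q ^ Suc m)" by (rule d)
    qed
    also have "\<dots> \<le> (1 + r) / 2" using N[OF m] unfolding R_def by simp
    finally have "norm (q * (1 + a * q ^ m) / (1 - q ^ Suc m)) \<le> (1 + r) / 2" .
    then have "norm (Tm a q m) * norm (q * (1 + a * q ^ m) / (1 - q ^ Suc m)) \<le> norm (Tm a q m) * ((1 + r) / 2)"
      by (intro mult_left_mono) auto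
    then show "norm (Tm a q (Suc m)) \<le> (1 + r) / 2 * norm (Tm a q m)"
      unfolding Tm_Suc[OF q, of a m] norm_mult by (simp only: mult.commute)
  qed
qed

lemma Tm_nonneg:
  fixes a q :: real
  assumes "0 \<le> a" "0 \<le> q" "q < 1"
  shows "0 \<le> Tm a q m"
proof -
  have "0 \<le> qpoch q q m" unfolding qpoch_def
    using assms by (intro prod_nonneg) (auto intro!: power_le_one simp: mult_le_one simp flip: power_Suc)
  moreover have "0 \<le> (\<Prod>i<m. 1 + a * q ^ i)" using assms by (intro prod_nonneg) auto
  ultimately show ?thesis using assms unfolding Tm_def by (intro mult_nonneg_nonneg divide_nonneg_nonneg) auto
qed



definition Oset :: "nat \<Rightarrow> overpartition set" where
  "Oset m = Aset m - (case m of 0 \<Rightarrow> {} | Suc n \<Rightarrow> Aset n)"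

lemma Aset_mono: "m \<le> n \<Longrightarrow> Aset m \<subseteq> Aset n"
  by (auto simp: Aset_def)

lemma part_le_size: "(x::nat) \<in># P \<Longrightarrow> x \<le> sum_mset P"
proof -
  assume "x \<in># P"
  then have "P = add_mset x (P - {#x#})" by simp
  then have "sum_mset P = x + sum_mset (P - {#x#})" by (metis sum_mset.add_mset)
  then show ?thesis by simp
qed

lemma O_has_sum:
  fixes a q :: "'a::{real_normed_field,banach}"
  assumes q: "norm q < 1"
  shows "(wt a q has_sum Tm a q m) (Oset m)"
proof (cases m)
  case 0
  then show ?thesis using conjunct1[OF A_has_sum[OF q, of a 0]] Lprod_sum_Tm[OF q, of a 0]
    by (simp add: Oset_def)
next
  case (Suc n)
  have sub: "Oset m \<subseteq> Aset m" by (auto simp: Oset_def)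
  have hA: "(wt a q has_sum Lprod a q m) (Aset m)" using A_has_sum[OF q] by blast
  have "wt a q summable_on Oset m"
    using summable_on_subset_banach[OF has_sum_imp_summable[OF hA] sub] .
  then obtain x where x: "(wt a q has_sum x) (Oset m)" by (auto simp: summable_on_def)
  have hn: "(wt a q has_sum Lprod a q n) (Aset n)" using A_has_sum[OF q] by blast
  have un: "Aset n \<union> Oset m = Aset m" and dj: "Aset n \<inter> Oset m = {}"
    using Aset_mono[of n m] Suc by (auto simp: Oset_def)
  have "(wt a q has_sum Lprod a q n + x) (Aset m)"
    using has_sum_Un_disjoint[OF hn x dj] un by simp
  then have "Lprod a q m = Lprod a q n + x" using hA has_sum_unique by blast
  then have "x = Tm a q m" using Suc by (simp add: Lprod_sum_Tm[OF q])
  then show ?thesis using x by simp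
qed

lemma Oset_sub: "Oset m \<subseteq> overpartitions"
  by (auto simp: Oset_def Aset_def)

lemma Aset_in_O: "\<pi> \<in> Aset N \<Longrightarrow> \<exists>m. \<pi> \<in> Oset m"
proof (induction N)
  case 0
  then show ?case by (intro exI[of _ 0]) (simp add: Oset_def)
next
  case (Suc N)
  then show ?case
  proof (cases "\<pi> \<in> Aset N")
    case False
    then show ?thesis using Suc.prems by (intro exI[of _ "Suc N"]) (simp add: Oset_def)
  qed (rule Suc.IH)
qed

lemma overpartitions_Union: "overpartitions = (\<Union>m\<in>UNIV. Oset m)"
proof
  show "overpartitions \<subseteq> (\<Union>m\<in>UNIV. Oset m)"
  proof
    fix \<pi> assume p: "\<pi> \<in> overpartitions"
    then have "\<pi> \<in> Aset (sum_mset (fst \<pi>))" by (auto simp: Aset_def part_le_size)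
    then show "\<pi> \<in> (\<Union>m\<in>UNIV. Oset m)" using Aset_in_O by blast
  qed
  show "(\<Union>m\<in>UNIV. Oset m) \<subseteq> overpartitions"
    using Oset_sub by (simp add: UN_subset_iff)
qed

lemma Oset_disj: "disjoint_family_on Oset UNIV"
proof -
  have *: "Oset m \<inter> Oset n = {}" if mn: "m < n" for m n
  proof -
    obtain k where n: "n = Suc k" using mn by (cases n) auto
    have "Oset m \<subseteq> Aset k" using Aset_mono[of m k] mn n by (auto simp: Oset_def)
    then show ?thesis by (auto simp: Oset_def n)
  qed
  show ?thesis unfolding disjoint_family_on_def
  proof (intro ballI impI)
    fix m n :: nat assume "m \<noteq> n"
    then consider "m < n" | "n < m" by linarith
    then show "Oset m \<inter> Oset n = {}"
      by cases (use *[of m n] *[of n m] in auto)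
  qed
qed



theorem mainTheorem10:
  fixes a q :: complex
  assumes "norm q < 1"
  shows "summable (\<lambda>m. q ^ m / qpoch q q m *
            (\<Sum>j\<le>m. a ^ j * q ^ (j choose 2) * qbinom q m j))
     \<and> ((\<lambda>\<pi>. a ^ op_overlined \<pi> * q ^ op_size \<pi>) has_sum
          (\<Sum>m. q ^ m / qpoch q q m *
            (\<Sum>j\<le>m. a ^ j * q ^ (j choose 2) * qbinom q m j))) overpartitions"
proof -
  have q: "norm q < 1" by (rule assms)
  have fun_eq: "(\<lambda>m. q ^ m / qpoch q q m * (\<Sum>j\<le>m. a ^ j * q ^ (j choose 2) * qbinom q m j)) = Tm a q"
    by (rule ext) (simp add: qbinomial_thm[OF q] Tm_def)
  have w_eq: "(\<lambda>\<pi>. a ^ op_overlined \<pi> * q ^ op_size \<pi>) = wt a q"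
    by (rule ext) (simp add: wt_def)
  have nq: "norm (norm q) < 1" using q by simp
  have nw: "norm (wt a q \<pi>) = wt (norm a) (norm q) \<pi>" for \<pi>
    by (simp add: wt_def norm_mult norm_power)
  have "(\<lambda>\<pi>. norm (wt a q \<pi>)) summable_on (\<Union>m\<in>UNIV. Oset m)"
  proof (subst summable_on_Union_iff[where g="Tm (norm a) (norm q)"])
    show "((\<lambda>\<pi>. norm (wt a q \<pi>)) has_sum Tm (norm a) (norm q) m) (Oset m)" for m
      unfolding nw using O_has_sum[OF nq] .
    show "disjoint_family_on Oset UNIV" by (rule Oset_disj)
    show "Tm (norm a) (norm q) summable_on UNIV"
      using Tm_summable[OF nq] Tm_nonneg[of "norm a" "norm q"] q
      by (subst summable_on_UNIV_nonneg_real_iff) auto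
  qed auto
  then have ns: "(\<lambda>\<pi>. norm (wt a q \<pi>)) summable_on overpartitions"
    using overpartitions_Union by simp
  have s: "wt a q summable_on overpartitions" using abs_summable_summable[OF ns] .
  define W where "W = infsum (wt a q) overpartitions"
  have hW: "(wt a q has_sum W) overpartitions" using s by (simp add: W_def)
  have inj: "inj_on snd (Sigma UNIV Oset)"
  proof (rule inj_onI)
    fix x y assume x: "x \<in> Sigma UNIV Oset" and y: "y \<in> Sigma UNIV Oset" and e: "snd x = snd y"
    have "fst x = fst y"
    proof (rule ccontr)
      assume "fst x \<noteq> fst y"
      then have "Oset (fst x) \<inter> Oset (fst y) = {}"
        using Oset_disj unfolding disjoint_family_on_def by blast
      moreover have "snd x \<in> Oset (fst x)" "snd x \<in> Oset (fst y)" using x y e by auto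
      ultimately show False by blast
    qed
    then show "x = y" using e by (simp add: prod_eq_iff)
  qed
  have img: "snd ` Sigma UNIV Oset = overpartitions"
  proof -
    have "snd ` Sigma UNIV Oset = (\<Union>m\<in>UNIV. Oset m)" by (auto simp: image_iff Bex_def)
    then show ?thesis using overpartitions_Union by simp
  qed
  have "((wt a q \<circ> snd) has_sum W) (Sigma UNIV Oset)"
    using has_sum_reindex[OF inj, of "wt a q" W] hW img by simp
  then have "((\<lambda>p. wt a q (snd p)) has_sum W) (Sigma UNIV Oset)" by (simp add: o_def)
  then have "(Tm a q has_sum W) UNIV"
    by (rule has_sum_Sigma') (use O_has_sum[OF q] in simp)
  then have "Tm a q sums W" by (rule has_sum_imp_sums)
  then have "summable (Tm a q)" "suminf (Tm a q) = W" by (auto simp: sums_iff)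
  then show ?thesis unfolding fun_eq w_eq using hW by simp
qed

end
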